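(* Let $R$ be a complete discrete valuation ring with fraction field $K$, maximal ideal $\mathfrak m$ and residue field $k=R/\mathfrak m$ of characteristic different from $2$. Let $E$ be an elliptic curve over $K$ given by $y^2=x^3+ax^2+bx$ with $a,b\in K$, let $E'$ be the elliptic curve $y^2=x^3-2ax^2+(a^2-4b)x$, and let $\delta_{E'}\colon E'(K)\to K^\times/(K^\times)^2$ be the homomorphism defined below. Regard $R^\times/(R^\times)^2$ as a subgroup of $K^\times/(K^\times)^2$. Suppose that, with respect to $R$ (via Tate's algorithm), $E$ and $E'$ have Kodaira symbols $\mathrm{I}_{2n}$ and $\mathrm{I}_n$, respectively, for some integer $n\geq 0$. Then: (i) if $E$ has split multiplicative reduction or $n$ is odd, then $\operatorname{Im}(\delta_{E'})=1$; (ii) if $E$ and $E'$ have good reduction (i.e. $n=0$), then $\operatorname{Im}(\delta_{E'})\subseteq R^\times/(R^\times)^2$.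
   Context: Let $\phi\colon E\to E'$ be the degree $2$ isogeny with kernel generated by $(0,0)$. The homomorphism $\delta_{E'}$ is the connecting homomorphism $E'(K)\to H^1(\operatorname{Gal}(\overline K/K),\ker\phi)\cong K^\times/(K^\times)^2$ (using $\ker\phi\cong\{\pm1\}$ as Galois modules); its kernel is $\phi(E(K))$, and explicitly $\delta_{E'}(O)=1$, $\delta_{E'}((0,0))=(a^2-4b)\cdot(K^\times)^2$, and $\delta_{E'}((x,y))=x\cdot(K^\times)^2$ for $(x,y)\in E'(K)\setminus\{O,(0,0)\}$. *)

theory Defs
  imports Main
begin

definition discrete_valuation :: "('k::field \<Rightarrow> int) \<Rightarrow> bool" where
  "discrete_valuation v \<longleftrightarrow>
     (\<forall>x y. x \<noteq> 0 \<longrightarrow> y \<noteq> 0 \<longrightarrow> v (x * y) = v x + v y) \<and>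
     (\<forall>x y. x \<noteq> 0 \<longrightarrow> y \<noteq> 0 \<longrightarrow> x + y \<noteq> 0 \<longrightarrow> v (x + y) \<ge> min (v x) (v y)) \<and>
     (\<exists>p. p \<noteq> 0 \<and> v p = 1)"

text \<open>Completeness of K with respect to the valuation (equivalently: R complete).
  "x close to 0 at level N" means x = 0 or v x >= N.\<close>
definition val_complete :: "('k::field \<Rightarrow> int) \<Rightarrow> bool" where
  "val_complete v \<longleftrightarrow>
     (\<forall>X :: nat \<Rightarrow> 'k.
        (\<forall>N::int. \<exists>M. \<forall>m\<ge>M. \<forall>n\<ge>M. X m - X n = 0 \<or> v (X m - X n) \<ge> N) \<longrightarrow>
        (\<exists>L. \<forall>N::int. \<exists>M. \<forall>n\<ge>M. X n - L = 0 \<or> v (X n - L) \<ge> N))"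

definition val_ring :: "('k::field \<Rightarrow> int) \<Rightarrow> 'k set" where
  "val_ring v = {x. x = 0 \<or> v x \<ge> 0}"

definition max_ideal :: "('k::field \<Rightarrow> int) \<Rightarrow> 'k set" where
  "max_ideal v = {x. x = 0 \<or> v x > 0}"

definition val_units :: "('k::field \<Rightarrow> int) \<Rightarrow> 'k set" where
  "val_units v = {x. x \<noteq> 0 \<and> v x = 0}"

definition residue_char_not_2 :: "('k::field \<Rightarrow> int) \<Rightarrow> bool" where
  "residue_char_not_2 v \<longleftrightarrow> (2::'k) \<in> val_units v"

section \<open>Weierstrass equations y^2 + a1 xy + a3 y = x^3 + a2 x^2 + a4 x + a6\<close>

type_synonym 'k weq = "'k \<times> 'k \<times> 'k \<times> 'k \<times> 'k"

fun wa1 :: "'k weq \<Rightarrow> 'k" where "wa1 (a1,a2,a3,a4,a6) = a1"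
fun wa2 :: "'k weq \<Rightarrow> 'k" where "wa2 (a1,a2,a3,a4,a6) = a2"
fun wa3 :: "'k weq \<Rightarrow> 'k" where "wa3 (a1,a2,a3,a4,a6) = a3"
fun wa4 :: "'k weq \<Rightarrow> 'k" where "wa4 (a1,a2,a3,a4,a6) = a4"
fun wa6 :: "'k weq \<Rightarrow> 'k" where "wa6 (a1,a2,a3,a4,a6) = a6"

definition wb2 :: "'k::comm_ring_1 weq \<Rightarrow> 'k" where
  "wb2 W = wa1 W ^ 2 + 4 * wa2 W"
definition wb4 :: "'k::comm_ring_1 weq \<Rightarrow> 'k" where
  "wb4 W = 2 * wa4 W + wa1 W * wa3 W"
definition wb6 :: "'k::comm_ring_1 weq \<Rightarrow> 'k" where
  "wb6 W = wa3 W ^ 2 + 4 * wa6 W"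
definition wb8 :: "'k::comm_ring_1 weq \<Rightarrow> 'k" where
  "wb8 W = wa1 W ^ 2 * wa6 W + 4 * wa2 W * wa6 W - wa1 W * wa3 W * wa4 W
           + wa2 W * wa3 W ^ 2 - wa4 W ^ 2"
definition wdisc :: "'k::comm_ring_1 weq \<Rightarrow> 'k" where
  "wdisc W = - (wb2 W ^ 2 * wb8 W) - 8 * wb4 W ^ 3 - 27 * wb6 W ^ 2
             + 9 * wb2 W * wb4 W * wb6 W"

text \<open>W' is obtained from W by the change of variables x = u^2 x' + r,
  y = u^3 y' + u^2 s x' + t (Silverman III.1).\<close>
definition weq_iso :: "'k::field weq \<Rightarrow> 'k weq \<Rightarrow> bool" where
  "weq_iso W W' \<longleftrightarrow> (\<exists>u r s t. u \<noteq> 0 \<and>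
     u * wa1 W' = wa1 W + 2 * s \<and>
     u ^ 2 * wa2 W' = wa2 W - s * wa1 W + 3 * r - s ^ 2 \<and>
     u ^ 3 * wa3 W' = wa3 W + r * wa1 W + 2 * t \<and>
     u ^ 4 * wa4 W' = wa4 W - s * wa3 W + 2 * r * wa2 W - (t + r * s) * wa1 W
                      + 3 * r ^ 2 - 2 * s * t \<and>
     u ^ 6 * wa6 W' = wa6 W + r * wa4 W + r ^ 2 * wa2 W + r ^ 3 - t * wa3 W
                      - t ^ 2 - r * t * wa1 W)"

definition weq_integral :: "('k::field \<Rightarrow> int) \<Rightarrow> 'k weq \<Rightarrow> bool" where
  "weq_integral v W \<longleftrightarrow> wa1 W \<in> val_ring v \<and> wa2 W \<in> val_ring v \<and>
     wa3 W \<in> val_ring v \<and> wa4 W \<in> val_ring v \<and> wa6 W \<in> val_ring v"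

text \<open>Tate's algorithm terminates with type I_0 at step 1 (pi does not divide Delta of an
  integral model) and with type I_m (m >= 1) at step 2 (an integral model with
  pi | a3, a4, a6 and pi not dividing b2; then m = v(Delta)).\<close>
definition kodaira_I :: "('k::field \<Rightarrow> int) \<Rightarrow> 'k weq \<Rightarrow> nat \<Rightarrow> bool" where
  "kodaira_I v W m \<longleftrightarrow> (\<exists>W0. weq_iso W W0 \<and> weq_integral v W0 \<and>
     ((m = 0 \<and> wdisc W0 \<in> val_units v) \<or>
      (m > 0 \<and> wa3 W0 \<in> max_ideal v \<and> wa4 W0 \<in> max_ideal v \<and> wa6 W0 \<in> max_ideal v \<and>
       wb2 W0 \<in> val_units v \<and> wdisc W0 \<noteq> 0 \<and> v (wdisc W0) = int m)))"

text \<open>Split multiplicative reduction: Tate's step 2 situation where T^2 + a1 T - a2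
  splits over the residue field.\<close>
definition split_mult :: "('k::field \<Rightarrow> int) \<Rightarrow> 'k weq \<Rightarrow> bool" where
  "split_mult v W \<longleftrightarrow> (\<exists>W0. weq_iso W W0 \<and> weq_integral v W0 \<and>
     wa3 W0 \<in> max_ideal v \<and> wa4 W0 \<in> max_ideal v \<and> wa6 W0 \<in> max_ideal v \<and>
     wb2 W0 \<in> val_units v \<and>
     (\<exists>T \<in> val_ring v. T ^ 2 + wa1 W0 * T - wa2 W0 \<in> max_ideal v))"

definition curveE :: "'k::field \<Rightarrow> 'k \<Rightarrow> 'k weq" where
  "curveE a b = (0, a, 0, b, 0)"

definition curveE' :: "'k::field \<Rightarrow> 'k \<Rightarrow> 'k weq" where
  "curveE' a b = (0, -2 * a, 0, a ^ 2 - 4 * b, 0)"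

text \<open>K-rational points of E': None is the point at infinity O.\<close>
definition pointsE' :: "'k::field \<Rightarrow> 'k \<Rightarrow> ('k \<times> 'k) option set" where
  "pointsE' a b = insert None
     {Some (x, y) | x y. y ^ 2 = x ^ 3 - 2 * a * x ^ 2 + (a ^ 2 - 4 * b) * x}"

definition deltaE'_rep :: "'k::field \<Rightarrow> 'k \<Rightarrow> ('k \<times> 'k) option \<Rightarrow> 'k" where
  "deltaE'_rep a b P = (case P of None \<Rightarrow> 1
     | Some (x, y) \<Rightarrow> if x = 0 \<and> y = 0 then a ^ 2 - 4 * b else x)"

text \<open>Square class c (K^x)^2 as a subset of K.\<close>
definition sq_class :: "'k::field \<Rightarrow> 'k set" where
  "sq_class c = {c * s ^ 2 | s. s \<noteq> 0}"

definition delta_image :: "'k::field \<Rightarrow> 'k \<Rightarrow> 'k set set" where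
  "delta_image a b = (\<lambda>P. sq_class (deltaE'_rep a b P)) ` pointsE' a b"

end

theory Submission
  imports Defs
begin



lemma iso_unfold:
  assumes "weq_iso (0, A, 0, B, 0) (a1, a2, a3, a4, a6)"
  shows "\<exists>u r s t. u \<noteq> 0 \<and> u * a1 = 2 * s \<and> u ^ 2 * a2 = A + 3 * r - s ^ 2 \<and>
     u ^ 3 * a3 = 2 * t \<and> u ^ 4 * a4 = B + 2 * r * A + 3 * r ^ 2 - 2 * s * t \<and>
     u ^ 6 * a6 = r * B + r ^ 2 * A + r ^ 3 - t ^ 2"
  using assms unfolding weq_iso_def by simp

lemma iso_disc:
  fixes A B u r s t a1 a2 a3 a4 a6 :: "'k::field"
  assumes h1: "u * a1 = 2 * s"
  and h2: "u ^ 2 * a2 = A + 3 * r - s ^ 2"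
  and h3: "u ^ 3 * a3 = 2 * t"
  and h4: "u ^ 4 * a4 = B + 2 * r * A + 3 * r ^ 2 - 2 * s * t"
  and h6: "u ^ 6 * a6 = r * B + r ^ 2 * A + r ^ 3 - t ^ 2"
  shows "16 * B^2 * (A^2 - 4*B) = u^12 * wdisc (a1,a2,a3,a4,a6)"
proof -
  have "u^12 * wdisc (a1,a2,a3,a4,a6) = wdisc (u*a1, u^2*a2, u^3*a3, u^4*a4, u^6*a6)"
    unfolding wdisc_def wb2_def wb4_def wb6_def wb8_def by simp algebra
  also have "\<dots> = 16 * B^2 * (A^2 - 4*B)"
    unfolding h1 h2 h3 h4 h6
    unfolding wdisc_def wb2_def wb4_def wb6_def wb8_def by simp algebra
  finally show ?thesis by simp
qed

lemma iso_c4: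
  fixes A B u r s t a1 a2 a3 a4 a6 :: "'k::field"
  assumes h1: "u * a1 = 2 * s"
  and h2: "u ^ 2 * a2 = A + 3 * r - s ^ 2"
  and h3: "u ^ 3 * a3 = 2 * t"
  and h4: "u ^ 4 * a4 = B + 2 * r * A + 3 * r ^ 2 - 2 * s * t"
  shows "16 * (A^2 - 3*B) = u^4 * (wb2 (a1,a2,a3,a4,a6) ^ 2 - 24 * wb4 (a1,a2,a3,a4,a6))"
proof -
  have "u^4 * (wb2 (a1,a2,a3,a4,a6) ^ 2 - 24 * wb4 (a1,a2,a3,a4,a6)) =
     ((u*a1)^2 + 4 * (u^2*a2))^2 - 24 * (2 * (u^4*a4) + (u*a1)*(u^3*a3))"
    unfolding wb2_def wb4_def by simp algebra
  also have "\<dots> = 16 * (A^2 - 3*B)"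
    unfolding h1 h2 h3 h4 by algebra
  finally show ?thesis by simp
qed



definition big :: "('k::field \<Rightarrow> int) \<Rightarrow> int \<Rightarrow> 'k \<Rightarrow> bool" where
  "big v k x \<longleftrightarrow> x = 0 \<or> v x \<ge> k"

locale dval =
  fixes v :: "'k::field \<Rightarrow> int"
  assumes dv: "discrete_valuation v"
begin

lemma vmult: "x \<noteq> 0 \<Longrightarrow> y \<noteq> 0 \<Longrightarrow> v (x * y) = v x + v y"
  using dv unfolding discrete_valuation_def by blast

lemma vadd: "x \<noteq> 0 \<Longrightarrow> y \<noteq> 0 \<Longrightarrow> x + y \<noteq> 0 \<Longrightarrow> v (x + y) \<ge> min (v x) (v y)"
  using dv unfolding discrete_valuation_def by blast

lemma unif: "\<exists>p. p \<noteq> 0 \<and> v p = 1"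
  using dv unfolding discrete_valuation_def by blast

lemma v1: "v 1 = 0"
  using vmult[of 1 1] by simp

lemma vinv: "x \<noteq> 0 \<Longrightarrow> v (inverse x) = - v x"
  using vmult[of x "inverse x"] v1 by simp

lemma vdiv: "x \<noteq> 0 \<Longrightarrow> y \<noteq> 0 \<Longrightarrow> v (x / y) = v x - v y"
  by (simp add: divide_inverse vmult vinv)

lemma vpow: "x \<noteq> 0 \<Longrightarrow> v (x ^ k) = int k * v x"
  by (induction k) (auto simp: v1 vmult algebra_simps)

lemma vm1: "v (-1) = 0"
  using vmult[of "-1" "-1"] v1 by simp

lemma vneg: "v (- x) = v x"
proof (cases "x = 0")
  case False
  then show ?thesis using vmult[of "-1" x] vm1 by simp
qed simp

lemma big_0[simp]: "big v k 0" by (simp add: big_def)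

lemma big_mono: "big v k x \<Longrightarrow> l \<le> k \<Longrightarrow> big v l x"
  unfolding big_def by auto

lemma big_neg: "big v k x \<Longrightarrow> big v k (- x)"
  unfolding big_def by (auto simp: vneg)

lemma big_add: "big v k x \<Longrightarrow> big v k y \<Longrightarrow> big v k (x + y)"
  unfolding big_def using vadd[of x y] by (cases "x = 0"; cases "y = 0"; cases "x + y = 0"; simp)

lemma big_diff: "big v k x \<Longrightarrow> big v k y \<Longrightarrow> big v k (x - y)"
  using big_add[of k x "-y"] big_neg[of k y] by simp

lemma big_mult: "big v k x \<Longrightarrow> big v l y \<Longrightarrow> big v (k + l) (x * y)"
  unfolding big_def by (cases "x = 0"; cases "y = 0"; simp add: vmult)

lemma big_self: "big v (v x) x" unfolding big_def by simp

lemma big_of_nat: "big v 0 (of_nat n)"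
proof (induction n)
  case (Suc n)
  have "big v 0 1" using v1 by (simp add: big_def)
  then show ?case using big_add[OF Suc] by (simp add: add.commute)
qed simp

lemma big_numeral: "big v 0 (numeral w)"
  using big_of_nat[of "numeral w"] by simp

lemma big_pow: "big v k x \<Longrightarrow> big v (int n * k) (x ^ n)"
proof (induction n)
  case 0 then show ?case using v1 by (simp add: big_def)
next
  case (Suc n)
  then show ?case using big_mult[of k x "int n * k" "x^n"] by (simp add: algebra_simps)
qed

lemma big_div: "y \<noteq> 0 \<Longrightarrow> big v k x \<Longrightarrow> big v (k - v y) (x / y)"
  unfolding big_def by (cases "x = 0"; simp add: vdiv)

lemma big_divI: "y \<noteq> 0 \<Longrightarrow> big v (k + v y) x \<Longrightarrow> big v k (x / y)"
  using big_div[of y "k + v y" x] by simp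

lemma big_mult_cancel: "y \<noteq> 0 \<Longrightarrow> big v k (x * y) \<Longrightarrow> big v (k - v y) x"
  using big_div[of y k "x*y"] by simp

lemma strict: assumes "x \<noteq> 0" "big v (v x + 1) y"
  shows "x + y \<noteq> 0 \<and> v (x + y) = v x"
proof (cases "y = 0")
  case True then show ?thesis using assms by simp
next
  case False
  then have vy: "v y > v x" using assms by (simp add: big_def)
  have ne: "x + y \<noteq> 0"
  proof
    assume "x + y = 0" then have "y = - x" by (simp add: eq_neg_iff_add_eq_0 add.commute)
    then have "v y = v x" using vneg by simp
    then show False using vy by simp
  qed
  have 1: "v (x + y) \<ge> v x" using vadd[OF assms(1) False ne] vy by simp
  have "x + y + (- y) \<noteq> 0" using assms(1) by simp
  then have "v (x + y + (- y)) \<ge> min (v (x + y)) (v (- y))"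
    using vadd[OF ne, of "- y"] False by simp
  then have "v x \<ge> min (v (x + y)) (v y)" by (simp add: vneg)
  then have 2: "v (x + y) \<le> v x" using vy by linarith
  show ?thesis using ne 1 2 by simp
qed

lemma strict': assumes "x \<noteq> 0" "big v (v x + 1) (y - x)"
  shows "y \<noteq> 0 \<and> v y = v x"
  using strict[OF assms] by simp

lemma big_all: "(\<And>N. big v N x) \<Longrightarrow> x = 0"
  unfolding big_def by (metis add1_zle_eq less_irrefl)


lemma big_one: "big v 0 1" using v1 by (simp add: big_def)

lemma big_unit: "x \<noteq> 0 \<Longrightarrow> v x = 0 \<Longrightarrow> big v 0 x" by (simp add: big_def)

lemma hensel1:
  assumes cpl: "val_complete v" and two: "(2::'k) \<noteq> 0" "v 2 = 0"
    and hx: "big v 1 (x - 1)"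
  shows "\<exists>s. s ^ 2 = x"
proof -
  define S where "S = rec_nat (1::'k) (\<lambda>_ s. s - (s^2 - x) / 2)"
  have S0: "S 0 = 1" by (simp add: S_def)
  have SS: "S (Suc k) = S k - (S k ^ 2 - x) / 2" for k by (simp add: S_def)
  have inv: "big v (int k + 1) (S k ^ 2 - x) \<and> big v 1 (S k - 1)" for k
  proof (induction k)
    case 0
    have "big v 1 (1 - x)" using big_neg[OF hx] by simp
    then show ?case using S0 by simp
  next
    case (Suc k)
    define s where "s = S k"
    define h where "h = (s ^ 2 - x) / 2"
    have e: "s ^ 2 - x = 2 * h" using two by (simp add: h_def)
    have hb: "big v (int k + 1) h" unfolding h_def
      using big_divI[OF two(1), of "int k + 1" "s^2 - x"] Suc s_def two by simp
    have sb: "big v 1 (1 - s)" using big_neg[of 1 "s - 1"] Suc s_def by simp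
    have "S (Suc k) = s - h" by (simp add: SS s_def h_def)
    moreover have "(s - h) ^ 2 - x = 2 * h * (1 - s) + h ^ 2"
    proof -
      have "(s - h) ^ 2 - x = (s ^ 2 - x) - 2 * s * h + h ^ 2" by (simp add: power2_eq_square algebra_simps)
      also have "\<dots> = 2 * h - 2 * s * h + h ^ 2" by (simp add: e)
      finally show ?thesis by (simp add: algebra_simps)
    qed
    moreover have "big v (int (Suc k) + 1) (2 * h * (1 - s) + h ^ 2)"
    proof (rule big_add)
      have "big v (0 + (int k + 1)) (2 * h)" by (rule big_mult[OF big_numeral hb])
      then have "big v ((int k + 1) + 1) (2 * h * (1 - s))" using big_mult sb by fastforce
      then show "big v (int (Suc k) + 1) (2 * h * (1 - s))" by simp
      have "big v (int 2 * (int k + 1)) (h ^ 2)" by (rule big_pow[OF hb])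
      then show "big v (int (Suc k) + 1) (h ^ 2)" by (rule big_mono) simp
    qed
    moreover have "big v 1 (s - h - 1)"
    proof -
      have "big v 1 ((s - 1) - h)" using big_diff[of 1 "s - 1" h] Suc s_def big_mono[OF hb] by simp
      then show ?thesis by (simp add: algebra_simps)
    qed
    ultimately show ?case by simp
  qed
  have step: "big v (int n + 1) (S (Suc n) - S n)" for n
  proof -
    have "S (Suc n) - S n = - ((S n ^ 2 - x) / 2)" by (simp add: SS)
    moreover have "big v (int n + 1) ((S n ^ 2 - x) / 2)"
      using big_divI[OF two(1), of "int n + 1" "S n ^ 2 - x"] inv two by simp
    ultimately show ?thesis using big_neg by simp
  qed
  have tele: "big v (int n + 1) (S (n + j) - S n)" for n j
  proof (induction j)
    case (Suc j)
    have A: "big v (int n + 1) (S (Suc (n + j)) - S (n + j))"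
      using step[of "n + j"] by (rule big_mono) simp
    have "big v (int n + 1) ((S (Suc (n + j)) - S (n + j)) + (S (n + j) - S n))"
      by (rule big_add[OF A Suc])
    then show ?case by simp
  qed simp
  have tele2: "big v (int M + 1) (S m - S M)" if "m \<ge> M" for m M
    using tele[of M "m - M"] that by simp
  have cauchy: "\<forall>N::int. \<exists>M. \<forall>m\<ge>M. \<forall>n\<ge>M. S m - S n = 0 \<or> v (S m - S n) \<ge> N"
  proof
    fix N :: int
    show "\<exists>M. \<forall>m\<ge>M. \<forall>n\<ge>M. S m - S n = 0 \<or> v (S m - S n) \<ge> N"
    proof (intro exI allI impI)
      fix m n assume "m \<ge> nat N" "n \<ge> nat N"
      then have "big v (int (nat N) + 1) ((S m - S (nat N)) - (S n - S (nat N)))"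
        using big_diff tele2 by blast
      then have "big v (int (nat N) + 1) (S m - S n)" by simp
      then have "big v N (S m - S n)" by (rule big_mono) simp
      then show "S m - S n = 0 \<or> v (S m - S n) \<ge> N" by (simp add: big_def)
    qed
  qed
  obtain L where L: "\<forall>N::int. \<exists>M. \<forall>n\<ge>M. S n - L = 0 \<or> v (S n - L) \<ge> N"
    using cpl cauchy unfolding val_complete_def by blast
  have "big v N (L ^ 2 - x)" for N
  proof -
    obtain M where M: "\<forall>n\<ge>M. big v (max N 1) (S n - L)" using L unfolding big_def by blast
    define n where "n = max M (nat N)"
    have "big v (max N 1) (S n - L)" using M n_def by simp
    then have "big v (max N 1) (- (S n - L))" by (rule big_neg)
    then have b1: "big v (max N 1) (L - S n)" by simp
    have b2: "big v 0 (S n)"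
    proof -
      have "big v 1 (S n - 1)" using inv[of n] by simp
      then have "big v 0 (S n - 1)" by (rule big_mono) simp
      then have "big v 0 ((S n - 1) + 1)" using big_one by (rule big_add)
      then show ?thesis by simp
    qed
    have b3: "big v 0 (L + S n)"
    proof -
      have "big v 0 (L - S n)" using b1 by (rule big_mono) simp
      moreover have "big v (0 + 0) (2 * S n)" using big_numeral b2 by (rule big_mult)
      ultimately have "big v 0 ((L - S n) + 2 * S n)" by (intro big_add) simp_all
      then show ?thesis by (simp add: algebra_simps)
    qed
    have E: "L ^ 2 - x = (L - S n) * (L + S n) + (S n ^ 2 - x)" by (simp add: power2_eq_square algebra_simps)
    have B1: "big v N ((L - S n) * (L + S n))"
      using big_mult[OF b1 b3] by (rule big_mono) simp
    have B2: "big v N (S n ^ 2 - x)" using inv[of n] by (rule conjE) (erule big_mono, simp add: n_def)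
    show ?thesis unfolding E by (rule big_add[OF B1 B2])
  qed
  then have "L ^ 2 - x = 0" by (rule big_all)
  then show ?thesis by auto
qed

lemma hensel:
  assumes cpl: "val_complete v" and two: "(2::'k) \<noteq> 0" "v 2 = 0"
    and c: "c \<noteq> 0" and hx: "big v (2 * v c + 1) (x - c ^ 2)"
  shows "\<exists>s. s ^ 2 = x"
proof -
  have c2: "c ^ 2 \<noteq> 0" "v (c ^ 2) = 2 * v c" using c vpow[OF c, of 2] by auto
  have "big v 1 ((x - c ^ 2) / c ^ 2)" using big_divI[OF c2(1), of 1] hx c2 by (simp add: add.commute)
  moreover have "(x - c ^ 2) / c ^ 2 = x / c ^ 2 - 1" using c2 by (simp add: diff_divide_distrib)
  ultimately obtain s where "s ^ 2 = x / c ^ 2" using hensel1[OF cpl two] by auto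
  then have "(s * c) ^ 2 = x" using c2 by (simp add: power_mult_distrib)
  then show ?thesis by blast
qed


lemma ring_big: "x \<in> val_ring v \<longleftrightarrow> big v 0 x"
  unfolding val_ring_def big_def by auto
lemma max_big: "x \<in> max_ideal v \<longleftrightarrow> big v 1 x"
  unfolding max_ideal_def big_def by auto

lemma v_unit_mult: "x \<noteq> 0 \<Longrightarrow> v u = 0 \<Longrightarrow> u \<noteq> 0 \<Longrightarrow> v (u * x) = v x"
  by (simp add: vmult)

lemma model_info:
  assumes two: "(2::'k) \<noteq> 0" "v 2 = 0"
    and k: "kodaira_I v (0, A, 0, B, 0) m" and B: "B \<noteq> 0" and D: "A^2 - 4*B \<noteq> 0"
  shows "\<exists>e. 2 * v B + v (A^2 - 4*B) = int m + 12 * e \<and>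
     (m > 0 \<longrightarrow> A^2 - 3*B \<noteq> 0 \<and> v (A^2 - 3*B) = 4 * e) \<and>
     (m = 0 \<longrightarrow> big v (4 * e) (A^2 - 3*B))"
proof -
  obtain W0 where W0: "weq_iso (0, A, 0, B, 0) W0" "weq_integral v W0"
     "(m = 0 \<and> wdisc W0 \<in> val_units v) \<or>
      (m > 0 \<and> wa3 W0 \<in> max_ideal v \<and> wa4 W0 \<in> max_ideal v \<and> wa6 W0 \<in> max_ideal v \<and>
       wb2 W0 \<in> val_units v \<and> wdisc W0 \<noteq> 0 \<and> v (wdisc W0) = int m)"
    using k unfolding kodaira_I_def by blast
  obtain a1 a2 a3 a4 a6 where W0e: "W0 = (a1, a2, a3, a4, a6)" by (cases W0) auto
  obtain u r s t where u: "u \<noteq> 0" and h1: "u * a1 = 2 * s" and h2: "u ^ 2 * a2 = A + 3 * r - s ^ 2"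
     and h3: "u ^ 3 * a3 = 2 * t" and h4: "u ^ 4 * a4 = B + 2 * r * A + 3 * r ^ 2 - 2 * s * t"
     and h6: "u ^ 6 * a6 = r * B + r ^ 2 * A + r ^ 3 - t ^ 2"
    using iso_unfold[of A B a1 a2 a3 a4 a6] W0(1) W0e by blast
  define e where "e = v u"
  have v16: "(16::'k) \<noteq> 0" "v (16::'k) = 0"
  proof -
    have n4: "(2::'k) * 2 \<noteq> 0" using two by (simp only: mult_eq_0_iff) simp
    have v4: "v ((2::'k) * 2) = 0" using vmult[OF two(1) two(1)] two(2) by simp
    have n16: "((2::'k) * 2) * (2 * 2) \<noteq> 0" using n4 by (simp only: mult_eq_0_iff) simp
    have v16: "v (((2::'k) * 2) * (2 * 2)) = 0" using vmult[OF n4 n4] v4 by simp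
    show "(16::'k) \<noteq> 0" using n16 by simp
    show "v (16::'k) = 0" using v16 by simp
  qed
  have dsc: "16 * B^2 * (A^2 - 4*B) = u^12 * wdisc W0"
    using iso_disc[OF h1 h2 h3 h4 h6] W0e by simp
  have c4: "16 * (A^2 - 3*B) = u^4 * (wb2 W0 ^ 2 - 24 * wb4 W0)"
    using iso_c4[OF h1 h2 h3 h4] W0e by simp
  have B2: "B^2 \<noteq> 0" "v (B^2) = 2 * v B" using B vpow[OF B, of 2] by auto
  have lhs_ne: "16 * B^2 * (A^2 - 4*B) \<noteq> 0" using v16 B D by simp
  have lhs_v: "v (16 * B^2 * (A^2 - 4*B)) = 2 * v B + v (A^2 - 4*B)"
    using v16 B2 D by (simp add: vmult)
  have d0: "wdisc W0 \<noteq> 0" using lhs_ne dsc by auto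
  have u12: "u ^ 12 \<noteq> 0" "v (u ^ 12) = 12 * e" using u vpow[OF u, of 12] e_def by auto
  have u4: "u ^ 4 \<noteq> 0" "v (u ^ 4) = 4 * e" using u vpow[OF u, of 4] e_def by auto
  have rhs_v: "v (u^12 * wdisc W0) = 12 * e + v (wdisc W0)" using u12 d0 by (simp add: vmult)
  have int: "big v 0 a1" "big v 0 a2" "big v 0 a3" "big v 0 a4" "big v 0 a6"
    using W0(2) W0e unfolding weq_integral_def ring_big by auto
  have c4W0_int: "big v 0 (wb2 W0 ^ 2 - 24 * wb4 W0)"
  proof -
    have b2: "big v 0 (wb2 W0)" unfolding W0e wb2_def
      using big_add[OF big_mult[OF int(1) int(1)] big_mult[OF big_numeral int(2)]] by (simp add: power2_eq_square)
    have b4: "big v 0 (wb4 W0)" unfolding W0e wb4_def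
      using big_add[OF big_mult[OF big_numeral int(4)] big_mult[OF int(1) int(3)]] by simp
    show ?thesis using big_diff[OF big_mult[OF b2 b2] big_mult[OF big_numeral b4]] by (simp add: power2_eq_square)
  qed
  show ?thesis
  proof (cases "m = 0")
    case True
    then have "wdisc W0 \<in> val_units v" using W0(3) by auto
    then have "v (wdisc W0) = 0" by (simp add: val_units_def)
    then have E1: "2 * v B + v (A^2 - 4*B) = int m + 12 * e" using True lhs_v rhs_v dsc by simp
    have "big v (v (u^4)) (u^4)" by (rule big_self)
    then have "big v (v (u^4) + 0) (u^4 * (wb2 W0 ^ 2 - 24 * wb4 W0))"
      using c4W0_int by (rule big_mult)
    then have "big v (4 * e + 0) (u^4 * (wb2 W0 ^ 2 - 24 * wb4 W0))" using u4 by simp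
    then have "big v (4 * e) (16 * (A^2 - 3*B))" using c4 by simp
    then have "big v (4 * e - v (16::'k)) (16 * (A^2 - 3*B) / 16)" using big_div v16 by blast
    then have X: "big v (4 * e) (16 * (A^2 - 3*B) / 16)" by (simp only: v16(2) diff_0_right)
    have eq: "16 * (A^2 - 3*B) / 16 = A^2 - 3*B" using v16(1) by (rule nonzero_mult_div_cancel_left)
    have "big v (4 * e) (A^2 - 3*B)" using X by (simp only: eq)
    then show ?thesis using E1 True by blast
  next
    case False
    then have m: "m > 0" "wa3 W0 \<in> max_ideal v" "wa4 W0 \<in> max_ideal v"
      "wb2 W0 \<in> val_units v" "wdisc W0 \<noteq> 0" "v (wdisc W0) = int m" using W0(3) by auto
    have E1: "2 * v B + v (A^2 - 4*B) = int m + 12 * e" using m lhs_v rhs_v dsc by simp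
    have b2u: "wb2 W0 ^ 2 \<noteq> 0" "v (wb2 W0 ^ 2) = 0"
      using m(4) vpow[of "wb2 W0" 2] by (auto simp: val_units_def)
    have a3m: "big v 1 a3" and a4m: "big v 1 a4" using m(2,3) W0e max_big by auto
    have n24: "big v 0 (24::'k)" "big v 0 (2::'k)" by (rule big_numeral)+
    have b4m: "big v 1 (24 * wb4 W0)" unfolding W0e wb4_def
      using big_mult[OF n24(1) big_add[OF big_mult[OF n24(2) a4m] big_mult[OF int(1) a3m]]] by simp
    have "big v (v (wb2 W0 ^ 2) + 1) (- (24 * wb4 W0))" using b2u big_neg[OF b4m] by simp
    from strict[OF b2u(1) this]
    have c4u: "wb2 W0 ^ 2 - 24 * wb4 W0 \<noteq> 0" "v (wb2 W0 ^ 2 - 24 * wb4 W0) = 0" using b2u by auto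
    have ne: "A^2 - 3*B \<noteq> 0" using c4 c4u u4 by auto
    have "v (16 * (A^2 - 3*B)) = 4 * e" using c4 c4u u4 by (simp add: vmult)
    moreover have "v (16 * (A^2 - 3*B)) = v (A^2 - 3*B)" using vmult[OF v16(1) ne] v16(2) by (simp only: add_0)
    ultimately have "v (A^2 - 3*B) = 4 * e" by (simp only:)
    then show ?thesis using E1 ne m by blast
  qed
qed

end


context dval begin
lemma v16_lemma: assumes two: "(2::'k) \<noteq> 0" "v 2 = 0" shows "(16::'k) \<noteq> 0" "v (16::'k) = 0"
proof -
    have n4: "(2::'k) * 2 \<noteq> 0" using two by (simp only: mult_eq_0_iff) simp
    have v4: "v ((2::'k) * 2) = 0" using vmult[OF two(1) two(1)] two(2) by simp
    have n16: "((2::'k) * 2) * (2 * 2) \<noteq> 0" using n4 by (simp only: mult_eq_0_iff) simp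
    have v16: "v (((2::'k) * 2) * (2 * 2)) = 0" using vmult[OF n4 n4] v4 by simp
    show "(16::'k) \<noteq> 0" using n16 by simp
    show "v (16::'k) = 0" using v16 by simp
qed

lemma split_info:
  assumes two: "(2::'k) \<noteq> 0" "v 2 = 0"
    and sp: "split_mult v (0, a, 0, b, 0)" and B: "b \<noteq> 0" and D: "a^2 - 4*b \<noteq> 0"
  shows "\<exists>u r s t T. u \<noteq> 0 \<and> a^2 - 3*b \<noteq> 0 \<and> v (a^2 - 3*b) = 4 * v u \<and>
     2 * v b + v (a^2 - 4*b) > 12 * v u \<and> big v (3 * v u + 1) t \<and>
     big v (4 * v u + 1) (b + 2 * r * a + 3 * r ^ 2 - 2 * s * t) \<and>
     big v (6 * v u + 1) (r * b + r ^ 2 * a + r ^ 3 - t ^ 2) \<and> big v (v u) s \<and>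
     big v (2 * v u + 1) ((u * T + s) ^ 2 - a - 3 * r)"
proof -
  obtain W0 T where W0: "weq_iso (0, a, 0, b, 0) W0" "weq_integral v W0"
     "wa3 W0 \<in> max_ideal v" "wa4 W0 \<in> max_ideal v" "wa6 W0 \<in> max_ideal v"
     "wb2 W0 \<in> val_units v" and T: "T \<in> val_ring v" "T ^ 2 + wa1 W0 * T - wa2 W0 \<in> max_ideal v"
    using sp unfolding split_mult_def by (elim exE conjE bexE) (rule that; assumption)
  obtain a1 a2 a3 a4 a6 where W0e: "W0 = (a1, a2, a3, a4, a6)" by (cases W0) auto
  obtain u r s t where u: "u \<noteq> 0" and h1: "u * a1 = 2 * s" and h2: "u ^ 2 * a2 = a + 3 * r - s ^ 2"
     and h3: "u ^ 3 * a3 = 2 * t" and h4: "u ^ 4 * a4 = b + 2 * r * a + 3 * r ^ 2 - 2 * s * t"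
     and h6: "u ^ 6 * a6 = r * b + r ^ 2 * a + r ^ 3 - t ^ 2"
    using iso_unfold[of a b a1 a2 a3 a4 a6] W0(1) W0e by blast
  define e where "e = v u"
  have v16: "(16::'k) \<noteq> 0" "v (16::'k) = 0" using v16_lemma[OF two] by auto
  have dsc: "16 * b^2 * (a^2 - 4*b) = u^12 * wdisc W0"
    using iso_disc[OF h1 h2 h3 h4 h6] W0e by simp
  have c4: "16 * (a^2 - 3*b) = u^4 * (wb2 W0 ^ 2 - 24 * wb4 W0)"
    using iso_c4[OF h1 h2 h3 h4] W0e by simp
  have B2: "b^2 \<noteq> 0" "v (b^2) = 2 * v b" using B vpow[OF B, of 2] by auto
  have lhs_ne: "16 * b^2 * (a^2 - 4*b) \<noteq> 0" using v16 B D by simp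
  have lhs_v: "v (16 * b^2 * (a^2 - 4*b)) = 2 * v b + v (a^2 - 4*b)"
    using v16 B2 D by (simp add: vmult)
  have d0: "wdisc W0 \<noteq> 0" using lhs_ne dsc by auto
  have u12: "u ^ 12 \<noteq> 0" "v (u ^ 12) = 12 * e" using u vpow[OF u, of 12] e_def by auto
  have u4: "u ^ 4 \<noteq> 0" "v (u ^ 4) = 4 * e" using u vpow[OF u, of 4] e_def by auto
  have rhs_v: "v (u^12 * wdisc W0) = 12 * e + v (wdisc W0)" using u12 d0 by (simp add: vmult)
  have int: "big v 0 a1" "big v 0 a2" using W0(2) W0e unfolding weq_integral_def ring_big by auto
  have m3: "big v 1 a3" "big v 1 a4" "big v 1 a6" using W0(3,4,5) W0e max_big by auto
  have c0: "big v 0 (2::'k)" "big v 0 (4::'k)" "big v 0 (8::'k)" "big v 0 (27::'k)" "big v 0 (9::'k)" "big v 0 (24::'k)"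
    by (rule big_numeral)+
  have b2: "big v 0 (wb2 W0)" unfolding W0e wb2_def
      using big_add[OF big_mult[OF int(1) int(1)] big_mult[OF c0(2) int(2)]] by (simp add: power2_eq_square)
  have b4: "big v 1 (wb4 W0)" unfolding W0e wb4_def
      using big_add[OF big_mult[OF c0(1) m3(2)] big_mult[OF int(1) m3(1)]] by simp
  have b6: "big v 1 (wb6 W0)" unfolding W0e wb6_def
      using big_add[OF big_mono[OF big_mult[OF m3(1) m3(1)]] big_mult[OF c0(2) m3(3)]] by (simp add: power2_eq_square)
  have b8: "big v 1 (wb8 W0)"
  proof -
    have t1: "big v 1 (a1 ^ 2 * a6)" using big_mult[OF big_mult[OF int(1) int(1)] m3(3)] by (simp add: power2_eq_square)
    have t2: "big v 1 (4 * a2 * a6)" using big_mult[OF big_mult[OF c0(2) int(2)] m3(3)] by simp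
    have t3: "big v 1 (a1 * a3 * a4)" using big_mono[OF big_mult[OF big_mult[OF int(1) m3(1)] m3(2)]] by simp
    have t4: "big v 1 (a2 * a3 ^ 2)" using big_mono[OF big_mult[OF int(2) big_mult[OF m3(1) m3(1)]]] by (simp add: power2_eq_square)
    have t5: "big v 1 (a4 ^ 2)" using big_mono[OF big_mult[OF m3(2) m3(2)]] by (simp add: power2_eq_square)
    show ?thesis unfolding W0e wb8_def wa1.simps wa2.simps wa3.simps wa4.simps wa6.simps
      by (intro big_add big_diff t1 t2 t3 t4 t5)
  qed
  have dW: "big v 1 (wdisc W0)"
  proof -
    have t1: "big v 1 (- (wb2 W0 ^ 2 * wb8 W0))" using big_neg[OF big_mult[OF big_mult[OF b2 b2] b8]] by (simp add: power2_eq_square)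
    have t2: "big v 1 (8 * wb4 W0 ^ 3)" using big_mono[OF big_mult[OF c0(3) big_mult[OF b4 big_mult[OF b4 b4]]]] by (simp add: power3_eq_cube mult.assoc)
    have t3: "big v 1 (27 * wb6 W0 ^ 2)" using big_mono[OF big_mult[OF c0(4) big_mult[OF b6 b6]]] by (simp add: power2_eq_square)
    have t4: "big v 1 (9 * wb2 W0 * wb4 W0 * wb6 W0)" using big_mono[OF big_mult[OF big_mult[OF big_mult[OF c0(5) b2] b4] b6]] by simp
    show ?thesis unfolding wdisc_def by (intro big_add big_diff t1 t2 t3 t4)
  qed
  have E1: "2 * v b + v (a^2 - 4*b) > 12 * e" using dW d0 lhs_v rhs_v dsc by (simp add: big_def)
  have b2u: "wb2 W0 ^ 2 \<noteq> 0" "v (wb2 W0 ^ 2) = 0"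
      using W0(6) vpow[of "wb2 W0" 2] by (auto simp: val_units_def)
  have b4m: "big v 1 (24 * wb4 W0)" using big_mult[OF c0(6) b4] by simp
  have "big v (v (wb2 W0 ^ 2) + 1) (- (24 * wb4 W0))" using b2u big_neg[OF b4m] by simp
  from strict[OF b2u(1) this]
  have c4u: "wb2 W0 ^ 2 - 24 * wb4 W0 \<noteq> 0" "v (wb2 W0 ^ 2 - 24 * wb4 W0) = 0" using b2u by auto
  have ne: "a^2 - 3*b \<noteq> 0" using c4 c4u u4 by auto
  have "v (16 * (a^2 - 3*b)) = 4 * e" using c4 c4u u4 by (simp add: vmult)
  moreover have "v (16 * (a^2 - 3*b)) = v (a^2 - 3*b)" using vmult[OF v16(1) ne] v16(2) by (simp only: add_0)
  ultimately have C: "v (a^2 - 3*b) = 4 * e" by (simp only:)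
  have vu: "\<And>k. v (u ^ k) = int k * e" using vpow[OF u] e_def by simp
  have unz: "\<And>k. u ^ k \<noteq> 0" using u by simp
  have tb: "big v (3 * e + 1) t"
  proof -
    have "big v (v (u^3) + 1) (u ^ 3 * a3)" using big_mult[OF big_self m3(1)] .
    then have "big v (3 * e + 1) (2 * t)" using h3 vu by simp
    then have "big v (3 * e + 1 - v (2::'k)) (2 * t / 2)" by (rule big_div[OF two(1)])
    then show ?thesis using two by simp
  qed
  have sb: "big v e s"
  proof -
    have "big v (v (u^1) + 0) (u ^ 1 * a1)" using big_mult[OF big_self int(1)] .
    then have "big v e (2 * s)" using h1 e_def by simp
    then have "big v (e - v (2::'k)) (2 * s / 2)" by (rule big_div[OF two(1)])
    then show ?thesis using two by simp
  qed
  have f4: "big v (4 * e + 1) (b + 2 * r * a + 3 * r ^ 2 - 2 * s * t)"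
  proof -
    have "big v (v (u^4) + 1) (u ^ 4 * a4)" using big_mult[OF big_self m3(2)] .
    then show ?thesis using h4 vu by simp
  qed
  have f6: "big v (6 * e + 1) (r * b + r ^ 2 * a + r ^ 3 - t ^ 2)"
  proof -
    have "big v (v (u^6) + 1) (u ^ 6 * a6)" using big_mult[OF big_self m3(3)] .
    then show ?thesis using h6 vu by simp
  qed
  have fT: "big v (2 * e + 1) ((u * T + s) ^ 2 - a - 3 * r)"
  proof -
    have "big v (v (u^2) + 1) (u ^ 2 * (T ^ 2 + a1 * T - a2))"
      using big_mult[OF big_self T(2)[unfolded W0e max_big, simplified]] .
    moreover have "u ^ 2 * (T ^ 2 + a1 * T - a2) = (u * T + s) ^ 2 - a - 3 * r"
    proof -
      have "u ^ 2 * (T ^ 2 + a1 * T - a2) = (u*T)^2 + (u * a1) * (u * T) - u^2 * a2"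
        by (simp add: power2_eq_square algebra_simps)
      also have "\<dots> = (u * T + s) ^ 2 - a - 3 * r" unfolding h1 h2 by (simp add: power2_eq_square algebra_simps)
      finally show ?thesis .
    qed
    ultimately show ?thesis using vu by simp
  qed
  show ?thesis using u ne C E1 tb f4 f6 sb fT e_def by blast
qed
end



lemma sq_class_mult:
  fixes c s :: "'k::field"
  assumes s: "s \<noteq> 0" shows "sq_class (c * s^2) = sq_class c"
proof (rule set_eqI)
  fix z
  show "z \<in> sq_class (c * s^2) \<longleftrightarrow> z \<in> sq_class c"
  proof
    assume "z \<in> sq_class (c * s^2)"
    then obtain t where t: "t \<noteq> 0" "z = c * s^2 * t^2" unfolding sq_class_def by blast
    then have "z = c * (s * t)^2" by (simp add: power_mult_distrib)
    moreover have "s * t \<noteq> 0" using s t by simp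
    ultimately show "z \<in> sq_class c" unfolding sq_class_def by blast
  next
    assume "z \<in> sq_class c"
    then obtain t where t: "t \<noteq> 0" "z = c * t^2" unfolding sq_class_def by blast
    then have "z = c * s^2 * (t / s)^2" using s by (simp add: power_divide)
    moreover have "t / s \<noteq> 0" using s t by simp
    ultimately show "z \<in> sq_class (c * s^2)" unfolding sq_class_def by blast
  qed
qed

lemma sq_class_sq:
  fixes d :: "'k::field"
  assumes "d \<noteq> 0" shows "sq_class (d^2) = sq_class 1"
  using sq_class_mult[OF assms, of 1] by simp

context dval begin

lemma even_class:
  assumes c: "c \<noteq> 0" and ev: "even (v c)"
  shows "sq_class c \<in> sq_class ` val_units v"
proof -
  obtain p where p: "p \<noteq> 0" "v p = 1" using unif by blast
  obtain k where k: "v c = 2 * k" using ev by (auto elim: evenE)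
  obtain s where s: "s \<noteq> 0" "v s = k"
  proof (cases "k \<ge> 0")
    case True
    then show ?thesis using that[of "p ^ nat k"] p vpow[OF p(1), of "nat k"] by simp
  next
    case False
    have "v (inverse (p ^ nat (- k))) = k" using vinv[of "p ^ nat (-k)"] p vpow[OF p(1), of "nat (-k)"] False by simp
    then show ?thesis using that[of "inverse (p ^ nat (- k))"] p by simp
  qed
  define c' where "c' = c / s^2"
  have s2: "s^2 \<noteq> 0" "v (s^2) = 2 * k" using s vpow[OF s(1), of 2] by auto
  have c'u: "c' \<in> val_units v" unfolding val_units_def c'_def using c s2 k by (simp add: vdiv)
  have "c = c' * s^2" unfolding c'_def using s2 by simp
  then have "sq_class c = sq_class c'" using sq_class_mult[OF s(1)] by simp
  then show ?thesis using c'u by blast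
qed

lemma pt_even:
  assumes two: "(2::'k) \<noteq> 0" "v 2 = 0"
    and eq: "y^2 = x * (x^2 - 2*a*x + D)" and x: "x \<noteq> 0" and D: "D \<noteq> 0" "v D = 2 * w"
    and a: "big v w a" and w: "even w"
  shows "even (v x)"
proof -
  define Q where "Q = x^2 - 2*a*x + D"
  have x2: "x^2 \<noteq> 0" "v (x^2) = 2 * v x" using x vpow[OF x, of 2] by auto
  have ax: "big v (w + v x) (2 * a * x)"
    using big_mult[OF big_mult[OF big_numeral a] big_self[of x]] by simp
  have key: "Q \<noteq> 0 \<Longrightarrow> y \<noteq> 0 \<and> 2 * v y = v x + v Q"
  proof -
    assume Q: "Q \<noteq> 0"
    have "y^2 = x * Q" using eq Q_def by simp
    moreover have "x * Q \<noteq> 0" using x Q by simp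
    ultimately have y: "y \<noteq> 0" by auto
    have "v (y^2) = v (x * Q)" using eq Q_def by simp
    then show ?thesis using y vpow[OF y, of 2] vmult[OF x Q] by simp
  qed
  consider "v x < w" | "v x > w" | "v x = w" by linarith
  then show ?thesis
  proof cases
    case 1
    have "big v (v (x^2) + 1) (D - 2 * a * x)"
    proof (rule big_diff)
      show "big v (v (x^2) + 1) D" using D x2 1 by (simp add: big_def)
      show "big v (v (x^2) + 1) (2 * a * x)" using ax x2 1 by (rule_tac big_mono) auto
    qed
    from strict[OF x2(1) this] have "Q \<noteq> 0" "v Q = 2 * v x" unfolding Q_def using x2 by (simp_all add: algebra_simps)
    then have "2 * v y = v x + 2 * v x" using key by simp
    then have "v x = 2 * (v y - v x)" by simp
    then show ?thesis by (metis dvd_triv_left)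
  next
    case 2
    have "big v (v D + 1) (x^2 - 2 * a * x)"
    proof (rule big_diff)
      show "big v (v D + 1) (x^2)" using D x2 2 by (simp add: big_def)
      show "big v (v D + 1) (2 * a * x)" using ax D 2 by (rule_tac big_mono) auto
    qed
    from strict[OF D(1) this] have "Q \<noteq> 0" "v Q = 2 * w" unfolding Q_def using D by (simp_all add: algebra_simps)
    then have "2 * v y = v x + 2 * w" using key by simp
    then have "v x = 2 * (v y - w)" by simp
    then show ?thesis by (metis dvd_triv_left)
  next
    case 3 then show ?thesis using w by simp
  qed
qed


lemma v4_lemma: assumes two: "(2::'k) \<noteq> 0" "v 2 = 0" shows "(4::'k) \<noteq> 0" "v (4::'k) = 0"
proof -
  have n4: "(2::'k) * 2 \<noteq> 0" using two by (simp only: mult_eq_0_iff) simp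
  have v4: "v ((2::'k) * 2) = 0" using vmult[OF two(1) two(1)] two(2) by simp
  show "(4::'k) \<noteq> 0" using n4 by simp
  show "v (4::'k) = 0" using v4 by simp
qed

lemma pt_square:
  assumes cpl: "val_complete v" and two: "(2::'k) \<noteq> 0" "v 2 = 0"
    and eq: "y^2 = x * (x^2 - 2*a*x + D)" and Ddef: "D = a^2 - 4*b"
    and x: "x \<noteq> 0" and a: "a \<noteq> 0" "v a = w" and D: "D \<noteq> 0" "v D = 2 * w"
    and b: "b \<noteq> 0" "v b = int n + 2 * w" and n: "n > 0"
    and d: "d \<noteq> 0" "d^2 = D" and w: "even w"
    and asq: "(\<exists>c. c^2 = a) \<or> odd n"
  shows "\<exists>z. z^2 = x"
proof -
  define Q where "Q = x^2 - 2*a*x + D"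
  have yQ: "y^2 = x * Q" using eq Q_def by simp
  have fromQ: "\<exists>z. z^2 = x" if q: "q \<noteq> 0" "q^2 = Q" for q
  proof -
    have q2: "q^2 \<noteq> 0" using q(1) by simp
    have "x = y^2 / q^2" using yQ q q2 by (simp add: eq_divide_eq)
    then have "x = (y / q)^2" by (simp add: power_divide)
    then show ?thesis by blast
  qed
  have key: "Q \<noteq> 0 \<Longrightarrow> y \<noteq> 0 \<and> 2 * v y = v x + v Q"
  proof -
    assume Q: "Q \<noteq> 0"
    have "x * Q \<noteq> 0" using x Q by simp
    then have y: "y \<noteq> 0" using yQ by auto
    have "v (y^2) = v (x * Q)" using yQ by simp
    then show ?thesis using y vpow[OF y, of 2] vmult[OF x Q] by simp
  qed
  have x2: "x^2 \<noteq> 0" "v (x^2) = 2 * v x" using x vpow[OF x, of 2] by auto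
  have ax: "big v (w + v x) (2 * a * x)"
    using big_mult[OF big_mult[OF big_numeral big_self[of a]] big_self[of x]] a by simp
  have vd: "v d = w" using vpow[OF d(1), of 2] d D by simp
  have v4: "(4::'k) \<noteq> 0" "v (4::'k) = 0" using v4_lemma[OF two] by auto
  have b4: "4 * b \<noteq> 0" "v (4 * b) = int n + 2 * w" "v (- (4 * b)) = int n + 2 * w"
    using v4 b vmult[OF v4(1) b(1)] vneg by auto
  consider "v x < w" | "v x > w" | "v x = w" by linarith
  then show ?thesis
  proof cases
    case 1
    have bg: "big v (2 * v x + 1) (Q - x^2)" unfolding Q_def
    proof -
      have "big v (2 * v x + 1) (D - 2 * a * x)"
      proof (rule big_diff)
        show "big v (2 * v x + 1) D" using D 1 by (simp add: big_def)
        show "big v (2 * v x + 1) (2 * a * x)" using ax 1 by (rule_tac big_mono) auto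
      qed
      then show "big v (2 * v x + 1) (x\<^sup>2 - 2 * a * x + D - x\<^sup>2)" by (simp add: algebra_simps)
    qed
    obtain q where q: "q^2 = Q" using hensel[OF cpl two x bg] by blast
    have "big v (v (x^2) + 1) (Q - x^2)" using bg x2 by simp
    from strict'[OF x2(1) this] have "Q \<noteq> 0" by simp
    then have "q \<noteq> 0" using q by auto
    then show ?thesis using fromQ q by blast
  next
    case 2
    have bg: "big v (2 * v d + 1) (Q - d^2)" unfolding Q_def d(2)
    proof -
      have "big v (2 * v d + 1) (x^2 - 2 * a * x)"
      proof (rule big_diff)
        show "big v (2 * v d + 1) (x^2)" using x2 vd 2 by (simp add: big_def)
        show "big v (2 * v d + 1) (2 * a * x)" using ax vd 2 by (rule_tac big_mono) auto
      qed
      then show "big v (2 * v d + 1) (x\<^sup>2 - 2 * a * x + D - D)" by (simp add: algebra_simps)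
    qed
    obtain q where q: "q^2 = Q" using hensel[OF cpl two d(1) bg] by blast
    have "big v (v D + 1) (Q - D)" using bg vd D d by simp
    from strict'[OF D(1) this] have "Q \<noteq> 0" by simp
    then have "q \<noteq> 0" using q by auto
    then show ?thesis using fromQ q by blast
  next
    case 3
    define z where "z = x - a"
    have Qz: "Q = z^2 - 4 * b" unfolding Q_def z_def Ddef by (simp add: power2_eq_square algebra_simps)
    show ?thesis
    proof (cases "z \<noteq> 0 \<and> 2 * v z < int n + 2 * w")
      case True
      then have z: "z \<noteq> 0" "2 * v z < int n + 2 * w" by auto
      have z2: "z^2 \<noteq> 0" "v (z^2) = 2 * v z" using z vpow[OF z(1), of 2] by auto
      have bg: "big v (2 * v z + 1) (Q - z^2)" unfolding Qz using b4 z by (simp add: big_def)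
      obtain q where q: "q^2 = Q" using hensel[OF cpl two z(1) bg] by blast
      have "big v (v (z^2) + 1) (Q - z^2)" using bg z2 by simp
      from strict'[OF z2(1) this] have "Q \<noteq> 0" by simp
      then have "q \<noteq> 0" using q by auto
      then show ?thesis using fromQ q by blast
    next
      case False
      then have zc: "z = 0 \<or> 2 * v z \<ge> int n + 2 * w" by auto
      show ?thesis using asq
      proof
        assume "\<exists>c. c^2 = a"
        then obtain c where c: "c^2 = a" by blast
        then have c0: "c \<noteq> 0" using a by auto
        have vc: "2 * v c = w" using vpow[OF c0, of 2] c a by simp
        show ?thesis
        proof (cases "z = 0")
          case True then show ?thesis using c z_def by auto
        next
          case False
          then have "v z \<ge> w + 1" using zc n by linarith
          then have "big v (2 * v c + 1) (x - c^2)" using vc c z_def by (simp add: big_def)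
          then show ?thesis using hensel[OF cpl two c0] by blast
        qed
      next
        assume on: "odd n"
        have "big v (v (- (4 * b)) + 1) (z^2)"
        proof (cases "z = 0")
          case False
          have "2 * v z \<noteq> int n + 2 * w"
          proof
            assume "2 * v z = int n + 2 * w"
            then have "int n = 2 * (v z - w)" by simp
            then have "even (int n)" by (metis dvd_triv_left)
            then show False using on by simp
          qed
          then show ?thesis using zc b4 vpow[OF False, of 2] False by (simp add: big_def)
        qed simp
        from strict[OF _ this] b4 have "Q \<noteq> 0" "v Q = int n + 2 * w" unfolding Qz by (simp_all add: algebra_simps)
        then have "2 * v y = w + int n + 2 * w" using key 3 by simp
        then have "int n = 2 * (v y - w) - w" by simp
        moreover obtain k where "w = 2 * k" using w by (auto elim: evenE)
        ultimately have "int n = 2 * (v y - w - k)" by simp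
        then have "even (int n)" by (metis dvd_triv_left)
        then show ?thesis using on by simp
      qed
    qed
  qed
qed

lemma split_square:
  assumes cpl: "val_complete v" and two: "(2::'k) \<noteq> 0" "v 2 = 0"
    and sp: "split_mult v (0, a, 0, b, 0)" and b: "b \<noteq> 0" "v b = int n + 4 * e"
    and D: "a^2 - 4*b \<noteq> 0" "v (a^2 - 4*b) = 4 * e"
    and a: "a \<noteq> 0" "v a = 2 * e" and n: "n > 0"
  shows "\<exists>c. c^2 = a"
proof -
  obtain u r s t T where u: "u \<noteq> 0" and ne: "a^2 - 3*b \<noteq> 0" and C: "v (a^2 - 3*b) = 4 * v u"
    and tb: "big v (3 * v u + 1) t"
    and f4: "big v (4 * v u + 1) (b + 2 * r * a + 3 * r ^ 2 - 2 * s * t)"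
    and f6: "big v (6 * v u + 1) (r * b + r ^ 2 * a + r ^ 3 - t ^ 2)" and sb: "big v (v u) s"
    and fT: "big v (2 * v u + 1) ((u * T + s) ^ 2 - a - 3 * r)"
    using split_info[OF two sp b(1) D(1)] by blast
  have "big v (v (a^2 - 4*b) + 1) b" using b D n by (simp add: big_def)
  from strict[OF D(1) this] have "v (a^2 - 3*b) = 4 * e" using D by (simp add: algebra_simps)
  then have eu: "v u = e" using C by simp
  have bb: "big v (4 * e + 1) b" using b n by (simp add: big_def)
  have n3: "big v 0 (3::'k)" by (rule big_numeral)
  have rb: "big v (2 * e + 1) r"
  proof (rule ccontr)
    assume nb: "\<not> big v (2 * e + 1) r"
    then have r: "r \<noteq> 0" "v r \<le> 2 * e" by (auto simp: big_def)
    define G where "G = r^2 + r * a + b"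
    have rG: "G * r = (r * b + r ^ 2 * a + r ^ 3 - t ^ 2) + t^2" unfolding G_def
      by (simp add: power2_eq_square power3_eq_cube algebra_simps)
    have T2: "big v (6 * e + 1) (t^2)"
      using big_pow[OF tb, of 2] eu by (rule_tac big_mono) auto
    have f6': "big v (6 * e + 1) (r * b + r ^ 2 * a + r ^ 3 - t ^ 2)" using f6 eu by simp
    have "big v (6 * e + 1) ((r * b + r ^ 2 * a + r ^ 3 - t ^ 2) + t^2)" by (rule big_add[OF f6' T2])
    then have "big v (6 * e + 1) (G * r)" by (simp only: rG)
    from big_mult_cancel[OF r(1) this] have G: "big v (6 * e + 1 - v r) G" .
    have r2: "r^2 \<noteq> 0" "v (r^2) = 2 * v r" using r vpow[OF r(1), of 2] by auto
    consider "v r < 2 * e" | "v r = 2 * e" using r by linarith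
    then show False
    proof cases
      case 1
      have "big v (v (r^2) + 1) (r * a + b)"
      proof (rule big_add)
        show "big v (v (r^2) + 1) (r * a)"
          using big_mult[OF big_self[of r] big_self[of a]] a r2 1 by (rule_tac big_mono) auto
        show "big v (v (r^2) + 1) b" using b r2 1 n by (simp add: big_def)
      qed
      from strict[OF r2(1) this] have "G \<noteq> 0" "v G = 2 * v r" unfolding G_def using r2 by (simp_all add: add.assoc)
      then show False using G 1 by (simp add: big_def)
    next
      case 2
      have G4: "big v (4 * e + 1) G" using G 2 by simp
      have "big v (4 * e + 1) (G - b)" by (rule big_diff[OF G4 bb])
      moreover have "G - b = (r + a) * r" unfolding G_def by (simp add: power2_eq_square algebra_simps)
      ultimately have "big v (4 * e + 1 - v r) (r + a)" using big_mult_cancel[OF r(1)] by simp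
      then have ra: "big v (2 * e + 1) (r + a)" using 2 by simp
      have st: "big v (4 * e + 1) (2 * s * t)"
        using big_mult[OF big_mult[OF big_numeral sb] tb] eu by simp
      have "(2 * a + 3 * r) * r = (b + 2 * r * a + 3 * r ^ 2 - 2 * s * t) - b + 2 * s * t"
        by (simp add: power2_eq_square algebra_simps)
      moreover have "big v (4 * e + 1) ((b + 2 * r * a + 3 * r ^ 2 - 2 * s * t) - b + 2 * s * t)"
        using big_add[OF big_diff[OF f4[unfolded eu] bb] st] .
      ultimately have "big v (4 * e + 1 - v r) (2 * a + 3 * r)" using big_mult_cancel[OF r(1)] by simp
      then have ar: "big v (2 * e + 1) (2 * a + 3 * r)" using 2 by simp
      have "big v (2 * e + 1) (3 * (r + a) - (2 * a + 3 * r))"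
        using big_diff[OF big_mult[OF n3 ra, unfolded add_0] ar] .
      then have "big v (2 * e + 1) a" by (simp add: algebra_simps)
      then show False using a by (simp add: big_def)
    qed
  qed
  define S where "S = u * T + s"
  have "big v (2 * e + 1) (((u * T + s) ^ 2 - a - 3 * r) + 3 * r)"
    using big_add[OF fT[unfolded eu] big_mult[OF n3 rb, unfolded add_0]] .
  then have "big v (2 * e + 1) (S^2 - a)" unfolding S_def by simp
  then have Sa: "big v (v a + 1) (S^2 - a)" using a by simp
  from strict'[OF a(1) Sa] have S2: "S^2 \<noteq> 0" "v (S^2) = 2 * e" using a by auto
  then have S0: "S \<noteq> 0" by auto
  have vS: "2 * v S = 2 * e" using S2 vpow[OF S0, of 2] by simp
  have "big v (2 * v S + 1) (a - S^2)" using big_neg[OF Sa] a vS by simp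
  then show ?thesis using hensel[OF cpl two S0] by blast
qed
end



context dval begin

lemma main:
  fixes a b :: 'k and n :: nat
  assumes cpl: "val_complete v"
    and ch: "residue_char_not_2 v"
    and ellE: "wdisc (curveE a b) \<noteq> 0"
    and ellE': "wdisc (curveE' a b) \<noteq> 0"
    and kE: "kodaira_I v (curveE a b) (2 * n)"
    and kE': "kodaira_I v (curveE' a b) n"
  shows "(split_mult v (curveE a b) \<or> odd n \<longrightarrow> delta_image a b = {sq_class 1})
       \<and> (n = 0 \<longrightarrow> delta_image a b \<subseteq> sq_class ` val_units v)"
proof -
  have two: "(2::'k) \<noteq> 0" "v 2 = 0" using ch unfolding residue_char_not_2_def val_units_def by auto
  have v16: "(16::'k) \<noteq> 0" "v (16::'k) = 0" using v16_lemma[OF two] by auto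
  have v4: "(4::'k) \<noteq> 0" "v (4::'k) = 0" using v4_lemma[OF two] by auto
  define D where "D = a^2 - 4*b"
  have discE: "wdisc (curveE a b) = 16 * b^2 * D"
    unfolding curveE_def wdisc_def wb2_def wb4_def wb6_def wb8_def D_def by simp algebra
  have discE': "wdisc (curveE' a b) = 256 * b * D^2"
    unfolding curveE'_def wdisc_def wb2_def wb4_def wb6_def wb8_def D_def by simp algebra
  have b0: "b \<noteq> 0" and D0: "D \<noteq> 0" using ellE discE by auto
  have cE: "curveE a b = (0, a, 0, b, 0)" by (simp add: curveE_def)
  have cE': "curveE' a b = (0, -2*a, 0, D, 0)" by (simp add: curveE'_def D_def)
  have e16b: "(-2*a)^2 - 4*D = 16 * b" unfolding D_def by (simp add: power2_eq_square algebra_simps)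
  have e3': "(-2*a)^2 - 3*D = D + 16 * b" unfolding D_def by (simp add: power2_eq_square algebra_simps)
  have e3: "a^2 - 3*b = D + b" unfolding D_def by simp
  have b16: "16 * b \<noteq> 0" "v (16 * b) = v b" using v16(1) b0 apply simp using vmult[OF v16(1) b0] v16(2) by simp
  have b4: "4 * b \<noteq> 0" "v (4 * b) = v b" using v4(1) b0 apply simp using vmult[OF v4(1) b0] v4(2) by simp
  have "\<exists>e. 2 * v b + v (a^2 - 4*b) = int (2 * n) + 12 * e \<and>
     (2 * n > 0 \<longrightarrow> a^2 - 3*b \<noteq> 0 \<and> v (a^2 - 3*b) = 4 * e) \<and>
     (2 * n = 0 \<longrightarrow> big v (4 * e) (a^2 - 3*b))"
    by (rule model_info[OF two kE[unfolded cE] b0 D0[unfolded D_def]])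
  then have "\<exists>e. 2 * v b + v D = int (2 * n) + 12 * e \<and>
     (2 * n > 0 \<longrightarrow> D + b \<noteq> 0 \<and> v (D + b) = 4 * e) \<and>
     (2 * n = 0 \<longrightarrow> big v (4 * e) (D + b))"
    by (simp only: e3 D_def[symmetric])
  then obtain e1 where E1: "2 * v b + v D = int (2 * n) + 12 * e1"
    and E1p: "2 * n > 0 \<longrightarrow> D + b \<noteq> 0 \<and> v (D + b) = 4 * e1"
    and E10: "2 * n = 0 \<longrightarrow> big v (4 * e1) (D + b)" by (elim exE conjE) (rule that; assumption)
  have "\<exists>e. 2 * v D + v ((-2*a)^2 - 4*D) = int n + 12 * e \<and>
     (n > 0 \<longrightarrow> (-2*a)^2 - 3*D \<noteq> 0 \<and> v ((-2*a)^2 - 3*D) = 4 * e) \<and>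
     (n = 0 \<longrightarrow> big v (4 * e) ((-2*a)^2 - 3*D))"
    by (rule model_info[OF two kE'[unfolded cE'] D0 b16(1)[folded e16b]])
  then have "\<exists>e. 2 * v D + v b = int n + 12 * e \<and>
     (n > 0 \<longrightarrow> D + 16 * b \<noteq> 0 \<and> v (D + 16 * b) = 4 * e) \<and>
     (n = 0 \<longrightarrow> big v (4 * e) (D + 16 * b))"
    by (simp only: e16b e3' b16(2))
  then obtain e2 where E2: "2 * v D + v b = int n + 12 * e2"
    and E2p: "n > 0 \<longrightarrow> D + 16 * b \<noteq> 0 \<and> v (D + 16 * b) = 4 * e2"
    and E20: "n = 0 \<longrightarrow> big v (4 * e2) (D + 16 * b)" by (elim exE conjE) (rule that; assumption)
  have vals: "v D = 4 * e1 \<and> v b = int n + 4 * e1"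
  proof (cases "n > 0")
    case True
    have p1: "D + b \<noteq> 0" "v (D + b) = 4 * e1" using E1p True by auto
    have p2: "D + 16 * b \<noteq> 0" "v (D + 16 * b) = 4 * e2" using E2p True by auto
    consider "v D < v b" | "v D > v b" | "v D = v b" by linarith
    then show ?thesis
    proof cases
      case 1
      have "big v (v D + 1) b" using 1 by (simp add: big_def)
      from strict[OF D0 this] have "v (D + b) = v D" by simp
      moreover have "big v (v D + 1) (16 * b)" using 1 b16 by (simp add: big_def)
      from strict[OF D0 this] have "v (D + 16 * b) = v D" by simp
      ultimately show ?thesis using p1 p2 E1 E2 by simp
    next
      case 2
      have "big v (v b + 1) D" using 2 by (simp add: big_def)
      from strict[OF b0 this] have "v (D + b) = v b" by (simp add: add.commute)
      moreover have "big v (v (16 * b) + 1) D" using 2 b16 by (simp add: big_def)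
      from strict[OF b16(1) this] have "v (D + 16 * b) = v b" using b16 by (simp add: add.commute)
      ultimately show ?thesis using p1 p2 E1 E2 True by simp
    next
      case 3
      have "v (D + b) \<ge> min (v D) (v b)" using vadd[OF D0 b0 p1(1)] .
      moreover have "v (D + 16 * b) \<ge> min (v D) (v (16 * b))" using vadd[OF D0 b16(1) p2(1)] .
      ultimately show ?thesis using p1 p2 E1 E2 True 3 b16 by simp
    qed
  next
    case False
    then have n0: "n = 0" by simp
    have p1: "big v (4 * e1) (D + b)" using E10 n0 by simp
    have p2: "big v (4 * e2) (D + 16 * b)" using E20 n0 by simp
    consider "v D < v b" | "v D > v b" | "v D = v b" by linarith
    then show ?thesis
    proof cases
      case 1
      have "big v (v D + 1) b" using 1 by (simp add: big_def)
      from strict[OF D0 this] have "D + b \<noteq> 0" "v (D + b) = v D" by simp_all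
      moreover have "big v (v D + 1) (16 * b)" using 1 b16 by (simp add: big_def)
      from strict[OF D0 this] have "D + 16 * b \<noteq> 0" "v (D + 16 * b) = v D" by simp_all
      ultimately show ?thesis using p1 p2 E1 E2 n0 1 by (simp add: big_def)
    next
      case 2
      have "big v (v b + 1) D" using 2 by (simp add: big_def)
      from strict[OF b0 this] have "D + b \<noteq> 0" "v (D + b) = v b" by (simp_all add: add.commute)
      moreover have "big v (v (16 * b) + 1) D" using 2 b16 by (simp add: big_def)
      from strict[OF b16(1) this] have "D + 16 * b \<noteq> 0" "v (D + 16 * b) = v b" using b16 by (simp_all add: add.commute)
      ultimately show ?thesis using p1 p2 E1 E2 n0 2 by (simp add: big_def)
    next
      case 3
      then show ?thesis using E1 E2 n0 by simp
    qed
  qed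
  have vD: "v D = 4 * e1" and vb: "v b = int n + 4 * e1" using vals by auto
  have aD: "a^2 = D + 4 * b" unfolding D_def by simp
  have aint: "big v (2 * e1) a"
  proof (cases "a = 0")
    case False
    have "big v (4 * e1) (a^2)" unfolding aD using vD vb b4 D0 by (intro big_add) (auto simp: big_def)
    then show ?thesis using False vpow[OF False, of 2] by (simp add: big_def)
  qed simp
  have pts: "P = None \<or> (\<exists>x y. P = Some (x, y) \<and> y^2 = x * (x^2 - 2*a*x + D))" if "P \<in> pointsE' a b" for P
    using that unfolding pointsE'_def D_def by (auto simp: power2_eq_square power3_eq_cube algebra_simps)
  have pts2: "x \<noteq> 0" if "y^2 = x * (x^2 - 2*a*x + D)" "\<not> (x = 0 \<and> y = 0)" for x y
    using that by auto
  have None: "None \<in> pointsE' a b" unfolding pointsE'_def by simp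
  have part1: "delta_image a b = {sq_class 1}" if hyp: "split_mult v (curveE a b) \<or> odd n"
  proof -
    have n: "n > 0"
    proof (rule ccontr)
      assume "\<not> n > 0"
      then have n0: "n = 0" by simp
      then have sp: "split_mult v (0, a, 0, b, 0)" using hyp cE by auto
      obtain u where u: "a^2 - 3*b \<noteq> 0" "v (a^2 - 3*b) = 4 * v u" "2 * v b + v (a^2 - 4*b) > 12 * v u"
        using split_info[OF two sp b0 D0[unfolded D_def]] by (elim exE conjE) (rule that; assumption)
      have u': "D + b \<noteq> 0" "v (D + b) = 4 * v u" "2 * v b + v D > 12 * v u"
        using u unfolding e3 D_def[symmetric] by simp_all
      have bD: "big v (4 * e1) D" "big v (4 * e1) b" using vD vb n0 by (simp_all add: big_def)
      have "big v (4 * e1) (D + b)" by (rule big_add[OF bD])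
      then have "4 * v u \<ge> 4 * e1" using u' by (simp add: big_def)
      then show False using u' vD vb n0 by simp
    qed
    have a2: "a^2 \<noteq> 0" "v (a^2) = 4 * e1"
    proof -
      have "big v (v D + 1) (4 * b)" using b4 vb vD n by (simp add: big_def)
      from strict[OF D0 this] show "a^2 \<noteq> 0" "v (a^2) = 4 * e1" using aD vD by simp_all
    qed
    have a0: "a \<noteq> 0" using a2 by auto
    have va: "v a = 2 * e1" using a2 vpow[OF a0, of 2] by simp
    have "big v (2 * v a + 1) (D - a^2)" unfolding aD using b4 vb va n vneg[of "4 * b"] by (simp add: big_def)
    then obtain d where d: "d^2 = D" using hensel[OF cpl two a0] by blast
    then have d0: "d \<noteq> 0" using D0 by auto
    have asq: "(\<exists>c. c^2 = a) \<or> odd n"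
    proof (cases "odd n")
      case False
      then have sp: "split_mult v (0, a, 0, b, 0)" using hyp cE by auto
      show ?thesis using split_square[OF cpl two sp b0 vb D0[unfolded D_def] vD[unfolded D_def] a0 va n] by blast
    qed simp
    have each: "sq_class (deltaE'_rep a b P) = sq_class 1" if P: "P \<in> pointsE' a b" for P
    proof -
      consider "P = None" | x y where "P = Some (x, y)" "y^2 = x * (x^2 - 2*a*x + D)" using pts[OF P] by blast
      then show ?thesis
      proof cases
        case 1 then show ?thesis by (simp add: deltaE'_rep_def)
      next
        case 2
        show ?thesis
        proof (cases "x = 0 \<and> y = 0")
          case True
          then have "deltaE'_rep a b P = d^2" using 2 d D_def by (simp add: deltaE'_rep_def)
          then show ?thesis using sq_class_sq[OF d0] by simp
        next
          case False
          then have x0: "x \<noteq> 0" using pts2 2 by blast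
          have "\<exists>z. z^2 = x"
          proof -
            have vD': "v D = 2 * (2 * e1)" using vD by simp
            have vb': "v b = int n + 2 * (2 * e1)" using vb by simp
            have w: "even (2 * e1)" by simp
            show ?thesis by (rule pt_square[OF cpl two 2(2) D_def x0 a0 va D0 vD' b0 vb' n d0 d w asq])
          qed
          then obtain z where z: "z^2 = x" by blast
          then have z0: "z \<noteq> 0" using x0 by auto
          have "deltaE'_rep a b P = z^2" using 2(1) False z by (auto simp: deltaE'_rep_def)
          then show ?thesis using sq_class_sq[OF z0] by simp
        qed
      qed
    qed
    show ?thesis unfolding delta_image_def
    proof (rule equalityI)
      show "(\<lambda>P. sq_class (deltaE'_rep a b P)) ` pointsE' a b \<subseteq> {sq_class 1}"
        using each by (intro image_subsetI) simp
      have "sq_class (deltaE'_rep a b None) = sq_class 1" by (simp add: deltaE'_rep_def)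
      then have "sq_class 1 \<in> (\<lambda>P. sq_class (deltaE'_rep a b P)) ` pointsE' a b"
        using None by (metis image_eqI)
      then show "{sq_class 1} \<subseteq> (\<lambda>P. sq_class (deltaE'_rep a b P)) ` pointsE' a b" by simp
    qed
  qed
  have part2: "delta_image a b \<subseteq> sq_class ` val_units v" if n0: "n = 0"
  proof
    fix C assume "C \<in> delta_image a b"
    then obtain P where P: "P \<in> pointsE' a b" and C: "C = sq_class (deltaE'_rep a b P)"
      unfolding delta_image_def by blast
    consider "P = None" | x y where "P = Some (x, y)" "y^2 = x * (x^2 - 2*a*x + D)" using pts[OF P] by blast
    then show "C \<in> sq_class ` val_units v"
    proof cases
      case 1
      have "(1::'k) \<in> val_units v" using v1 by (simp add: val_units_def)
      then show ?thesis using 1 C by (simp add: deltaE'_rep_def)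
    next
      case 2
      show ?thesis
      proof (cases "x = 0 \<and> y = 0")
        case True
        then have "deltaE'_rep a b P = D" using 2 D_def by (simp add: deltaE'_rep_def)
        moreover have "even (v D)" using vD by simp
        ultimately show ?thesis using even_class[OF D0] C by simp
      next
        case False
        then have x0: "x \<noteq> 0" using pts2 2 by blast
        have "even (v x)" using pt_even[OF two 2(2) x0 D0, of "2 * e1"] vD aint by simp
        moreover have "deltaE'_rep a b P = x" using 2(1) False by (auto simp: deltaE'_rep_def)
        ultimately show ?thesis using even_class[OF x0] C by simp
      qed
    qed
  qed
  show ?thesis using part1 part2 by blast
qed

end


theorem lemma3p3:
  fixes v :: "'k::field \<Rightarrow> int" and a b :: 'k and n :: nat
  assumes dv: "discrete_valuation v"
    and cpl: "val_complete v"
    and ch: "residue_char_not_2 v"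
    and ellE: "wdisc (curveE a b) \<noteq> 0"
    and ellE': "wdisc (curveE' a b) \<noteq> 0"
    and kE: "kodaira_I v (curveE a b) (2 * n)"
    and kE': "kodaira_I v (curveE' a b) n"
  shows "(split_mult v (curveE a b) \<or> odd n \<longrightarrow> delta_image a b = {sq_class 1})
       \<and> (n = 0 \<longrightarrow> delta_image a b \<subseteq> sq_class ` val_units v)"
  by (rule dval.main[OF dval.intro[OF dv] cpl ch ellE ellE' kE kE'])

end
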